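(* Let $\alpha\in(0,1/2)$ be irrational with continued fraction expansion $[0;a_1,a_2,\ldots]$, let $k\ge1$, and suppose that $a_{k+1}>1$. Then there exists a factor of slope $\alpha$ whose minimum abelian period equals $q_k+q_{k-1}$ or $2q_k$.
   Context: $a_i$ are positive integers; $q_{-1}=0$, $q_0=1$, $q_1=a_1$, $q_k=a_kq_{k-1}+q_{k-2}$ for $k\ge2$ (denominators of convergents). Sturmian words: identify the circle $\mathbb{T}$ with $[0,1)$, let $R(\rho)=\{\rho+\alpha\}$, and fix one of the conventions $I_0=[0,1-\alpha)$, $I_1=[1-\alpha,1)$ or $I_0=(0,1-\alpha]$, $I_1=(1-\alpha,1]$. The Sturmian word $\mathbf{s}_{\rho,\alpha}$ has $n$-th letter $0$ if $R^n(\rho)\in I_0$ and $1$ otherwise. All these words have the same set $\mathcal{L}_\alpha$ of finite factors, the factors of slope $\alpha$. Abelian periods: the Parikh vector of a binary word $u$ is $(|u|_0,|u|_1)$; $P$ is contained in $Q$ if $P\le Q$ componentwise and $P\ne Q$. An abelian decomposition of $w$ is $w=u_0u_1\cdots u_{n-1}u_n$, $n\ge2$, with $u_1,\dots,u_{n-1}$ having a common Parikh vector $P$ and the Parikh vectors of $u_0,u_n$ contained in $P$; the common length of $u_1,\ldots,u_{n-1}$ is an abelian period; the minimum abelian period is the least one. *)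

theory Defs
  imports Complex_Main
begin

primrec cf_r :: "real \<Rightarrow> nat \<Rightarrow> real" where
  "cf_r \<alpha> 0 = \<alpha>"
| "cf_r \<alpha> (Suc n) = frac (1 / cf_r \<alpha> n)"

fun cf_a :: "real \<Rightarrow> nat \<Rightarrow> nat" where
  "cf_a \<alpha> 0 = nat \<lfloor>\<alpha>\<rfloor>"
| "cf_a \<alpha> (Suc n) = nat \<lfloor>1 / cf_r \<alpha> n\<rfloor>"

fun cf_q :: "real \<Rightarrow> nat \<Rightarrow> nat" where
  "cf_q \<alpha> 0 = 1"
| "cf_q \<alpha> (Suc 0) = cf_a \<alpha> 1"
| "cf_q \<alpha> (Suc (Suc n)) = cf_a \<alpha> (n + 2) * cf_q \<alpha> (n + 1) + cf_q \<alpha> n"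

text \<open>Sturmian word s_(rho,alpha) with the convention I_0 = [0, 1 - alpha).\<close>
definition sturmian :: "real \<Rightarrow> real \<Rightarrow> nat \<Rightarrow> nat" where
  "sturmian \<rho> \<alpha> n = (if frac (\<rho> + real n * \<alpha>) < 1 - \<alpha> then 0 else 1)"

definition factors_slope :: "real \<Rightarrow> nat list set" where
  "factors_slope \<alpha> = {w. \<exists>\<rho> i. 0 \<le> \<rho> \<and> \<rho> < 1 \<and>
       w = map (sturmian \<rho> \<alpha>) [i..<i + length w]}"

definition parikh :: "nat list \<Rightarrow> nat \<times> nat" where
  "parikh u = (count_list u 0, count_list u 1)"

definition parikh_contained :: "nat \<times> nat \<Rightarrow> nat \<times> nat \<Rightarrow> bool" where
  "parikh_contained P Q \<longleftrightarrow> fst P \<le> fst Q \<and> snd P \<le> snd Q \<and> P \<noteq> Q"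

definition abelian_decomposition :: "nat list \<Rightarrow> nat list list \<Rightarrow> bool" where
  "abelian_decomposition w us \<longleftrightarrow> length us \<ge> 3 \<and> concat us = w \<and>
     (\<forall>j. 1 \<le> j \<and> j < length us - 1 \<longrightarrow> parikh (us ! j) = parikh (us ! 1)) \<and>
     parikh_contained (parikh (hd us)) (parikh (us ! 1)) \<and>
     parikh_contained (parikh (last us)) (parikh (us ! 1))"

definition abelian_period :: "nat list \<Rightarrow> nat \<Rightarrow> bool" where
  "abelian_period w p \<longleftrightarrow> (\<exists>us. abelian_decomposition w us \<and> length (us ! 1) = p)"

definition min_abelian_period :: "nat list \<Rightarrow> nat" where
  "min_abelian_period w = (LEAST p. abelian_period w p)"

end

theory Submission
  imports Defs
begin

lemma frac_rat: "x \<in> \<rat> \<longleftrightarrow> frac x \<in> \<rat>"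
proof
  assume "x \<in> \<rat>"
  thus "frac x \<in> \<rat>" unfolding frac_def by (intro Rats_diff) auto
next
  assume "frac x \<in> \<rat>"
  hence "frac x + of_int \<lfloor>x\<rfloor> \<in> \<rat>" by (intro Rats_add) auto
  thus "x \<in> \<rat>" by (simp add: frac_def)
qed

lemma cf_r_irrat: "\<alpha> \<notin> \<rat> \<Longrightarrow> cf_r \<alpha> n \<notin> \<rat>"
proof (induction n)
  case 0 then show ?case by simp
next
  case (Suc n)
  then show ?case using frac_rat Rats_inverse
    by (metis cf_r.simps(2) divide_inverse inverse_inverse_eq mult_1)
qed

lemma cf_r_bounds:
  assumes "0 < \<alpha>" "\<alpha> < 1" "\<alpha> \<notin> \<rat>"
  shows "0 < cf_r \<alpha> n \<and> cf_r \<alpha> n < 1"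
proof (cases n)
  case 0 then show ?thesis using assms by simp
next
  case (Suc m)
  have "cf_r \<alpha> n \<notin> \<rat>" using cf_r_irrat assms by blast
  hence "cf_r \<alpha> n \<noteq> 0" by auto
  moreover have "cf_r \<alpha> n = frac (1 / cf_r \<alpha> m)" using Suc by simp
  ultimately show ?thesis using frac_ge_0 frac_lt_1
    by (metis less_eq_real_def)
qed

lemma cf_a_real:
  assumes "0 < \<alpha>" "\<alpha> < 1" "\<alpha> \<notin> \<rat>"
  shows "real (cf_a \<alpha> (Suc n)) = of_int \<lfloor>1 / cf_r \<alpha> n\<rfloor>"
proof -
  have "0 < cf_r \<alpha> n" using cf_r_bounds[OF assms] by blast
  hence "0 \<le> \<lfloor>1 / cf_r \<alpha> n\<rfloor>" by simp
  thus ?thesis by simp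
qed

lemma cf_a_ge1:
  assumes "0 < \<alpha>" "\<alpha> < 1" "\<alpha> \<notin> \<rat>"
  shows "cf_a \<alpha> (Suc n) \<ge> 1"
proof -
  have h: "0 < cf_r \<alpha> n" "cf_r \<alpha> n < 1" using cf_r_bounds[OF assms] by blast+
  hence "1 < 1 / cf_r \<alpha> n" by simp
  hence "1 \<le> real (cf_a \<alpha> (Suc n))" using cf_a_real[OF assms, of n] by simp
  thus ?thesis by simp
qed

declare cf_a.simps(2)[simp del]
declare cf_r.simps(2)[simp del]

lemma cf_key:
  assumes "0 < \<alpha>" "\<alpha> < 1" "\<alpha> \<notin> \<rat>"
  shows "cf_r \<alpha> n * (real (cf_a \<alpha> (Suc n)) + cf_r \<alpha> (Suc n)) = 1"
proof -
  have h: "0 < cf_r \<alpha> n" using cf_r_bounds[OF assms] by blast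
  have "real (cf_a \<alpha> (Suc n)) + cf_r \<alpha> (Suc n) = 1 / cf_r \<alpha> n"
    using cf_a_real[OF assms, of n] by (simp add: frac_def cf_r.simps(2))
  thus ?thesis using h by simp
qed

definition R :: "real \<Rightarrow> nat \<Rightarrow> real" where
  "R \<alpha> n = (\<Prod>i\<le>n. cf_r \<alpha> i)"

lemma R_0[simp]: "R \<alpha> 0 = \<alpha>" by (simp add: R_def)
lemma R_Suc: "R \<alpha> (Suc n) = R \<alpha> n * cf_r \<alpha> (Suc n)" by (simp add: R_def)

lemma R_pos:
  assumes "0 < \<alpha>" "\<alpha> < 1" "\<alpha> \<notin> \<rat>"
  shows "0 < R \<alpha> n"
  unfolding R_def using cf_r_bounds[OF assms] by (simp add: prod_pos)

lemma R_rec0: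
  assumes "0 < \<alpha>" "\<alpha> < 1" "\<alpha> \<notin> \<rat>"
  shows "real (cf_a \<alpha> 1) * R \<alpha> 0 + R \<alpha> 1 = 1"
  using cf_key[OF assms, of 0] by (simp add: R_Suc algebra_simps)

lemma R_rec:
  assumes "0 < \<alpha>" "\<alpha> < 1" "\<alpha> \<notin> \<rat>"
  shows "R \<alpha> n = real (cf_a \<alpha> (n+2)) * R \<alpha> (n+1) + R \<alpha> (n+2)"
proof -
  have "R \<alpha> (n+1) = R \<alpha> n * cf_r \<alpha> (Suc n)" by (simp add: R_Suc)
  moreover have "R \<alpha> (n+2) = R \<alpha> n * cf_r \<alpha> (Suc n) * cf_r \<alpha> (Suc (Suc n))"
    by (simp add: R_Suc)
  moreover have "cf_r \<alpha> (Suc n) * (real (cf_a \<alpha> (Suc (Suc n))) + cf_r \<alpha> (Suc (Suc n))) = 1"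
    using cf_key[OF assms] by blast
  ultimately show ?thesis
  proof -
    assume e1: "R \<alpha> (n+1) = R \<alpha> n * cf_r \<alpha> (Suc n)"
      and e2: "R \<alpha> (n+2) = R \<alpha> n * cf_r \<alpha> (Suc n) * cf_r \<alpha> (Suc (Suc n))"
      and k: "cf_r \<alpha> (Suc n) * (real (cf_a \<alpha> (Suc (Suc n))) + cf_r \<alpha> (Suc (Suc n))) = 1"
    have "R \<alpha> n = R \<alpha> n * (cf_r \<alpha> (Suc n) * (real (cf_a \<alpha> (Suc (Suc n))) + cf_r \<alpha> (Suc (Suc n))))"
      using k by simp
    also have "\<dots> = real (cf_a \<alpha> (Suc (Suc n))) * (R \<alpha> n * cf_r \<alpha> (Suc n))
        + R \<alpha> n * cf_r \<alpha> (Suc n) * cf_r \<alpha> (Suc (Suc n))"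
      by (simp add: algebra_simps)
    finally show ?thesis using e1 e2 by (simp add: numeral_2_eq_2)
  qed
qed

fun cf_p :: "real \<Rightarrow> nat \<Rightarrow> nat" where
  "cf_p \<alpha> 0 = 0"
| "cf_p \<alpha> (Suc 0) = 1"
| "cf_p \<alpha> (Suc (Suc n)) = cf_a \<alpha> (n + 2) * cf_p \<alpha> (n + 1) + cf_p \<alpha> n"

lemma qR:
  assumes "0 < \<alpha>" "\<alpha> < 1" "\<alpha> \<notin> \<rat>"
  shows "real (cf_q \<alpha> (n+1)) * R \<alpha> n + real (cf_q \<alpha> n) * R \<alpha> (n+1) = 1"
proof (induction n)
  case 0 then show ?case using R_rec0[OF assms] by simp
next
  case (Suc n)
  have "real (cf_q \<alpha> (Suc n + 1)) = real (cf_a \<alpha> (n+2)) * real (cf_q \<alpha> (n+1)) + real (cf_q \<alpha> n)"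
    by simp
  then show ?case using Suc R_rec[OF assms, of n]
    by (simp add: algebra_simps)
qed

lemma eR:
  assumes "0 < \<alpha>" "\<alpha> < 1" "\<alpha> \<notin> \<rat>"
  shows "real (cf_q \<alpha> n) * \<alpha> - real (cf_p \<alpha> n) = (-1)^n * R \<alpha> n
       \<and> real (cf_q \<alpha> (n+1)) * \<alpha> - real (cf_p \<alpha> (n+1)) = (-1)^(n+1) * R \<alpha> (n+1)"
proof (induction n)
  case 0
  then show ?case using R_rec0[OF assms] by (simp add: algebra_simps)
next
  case (Suc n)
  have q: "real (cf_q \<alpha> (n+2)) = real (cf_a \<alpha> (n+2)) * real (cf_q \<alpha> (n+1)) + real (cf_q \<alpha> n)"
    by (simp add: numeral_2_eq_2)
  have p: "real (cf_p \<alpha> (n+2)) = real (cf_a \<alpha> (n+2)) * real (cf_p \<alpha> (n+1)) + real (cf_p \<alpha> n)"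
    by (simp add: numeral_2_eq_2)
  have "real (cf_q \<alpha> (n+2)) * \<alpha> - real (cf_p \<alpha> (n+2))
      = real (cf_a \<alpha> (n+2)) * (real (cf_q \<alpha> (n+1)) * \<alpha> - real (cf_p \<alpha> (n+1)))
        + (real (cf_q \<alpha> n) * \<alpha> - real (cf_p \<alpha> n))"
    unfolding q p by (simp add: algebra_simps)
  also have "\<dots> = (-1)^n * (R \<alpha> n - real (cf_a \<alpha> (n+2)) * R \<alpha> (n+1))"
  proof -
    have h1: "real (cf_q \<alpha> (n+1)) * \<alpha> - real (cf_p \<alpha> (n+1)) = - ((-1)^n * R \<alpha> (n+1))"
      using Suc by simp
    have h2: "real (cf_q \<alpha> n) * \<alpha> - real (cf_p \<alpha> n) = (-1)^n * R \<alpha> n"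
      using Suc by simp
    show ?thesis unfolding h1 h2 by (simp add: algebra_simps)
  qed
  also have "\<dots> = (-1)^(n+2) * R \<alpha> (n+2)"
    using R_rec[OF assms, of n] by simp
  finally have "real (cf_q \<alpha> (Suc n + 1)) * \<alpha> - real (cf_p \<alpha> (Suc n + 1)) = (-1)^(Suc n+1) * R \<alpha> (Suc n+1)"
    by (simp add: numeral_2_eq_2)
  with Suc show ?case by simp
qed

lemma det:
  "int (cf_q \<alpha> (n+1)) * int (cf_p \<alpha> n) - int (cf_p \<alpha> (n+1)) * int (cf_q \<alpha> n) = (-1)^(n+1)"
proof (induction n)
  case 0 then show ?case by simp
next
  case (Suc n)
  have q: "int (cf_q \<alpha> (Suc n+1)) = int (cf_a \<alpha> (n+2)) * int (cf_q \<alpha> (n+1)) + int (cf_q \<alpha> n)"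
    by simp
  have p: "int (cf_p \<alpha> (Suc n+1)) = int (cf_a \<alpha> (n+2)) * int (cf_p \<alpha> (n+1)) + int (cf_p \<alpha> n)"
    by simp
  show ?case unfolding q p using Suc by (simp add: algebra_simps)
qed



definition Fl :: "real \<Rightarrow> real \<Rightarrow> nat \<Rightarrow> int" where
  "Fl \<rho> \<alpha> n = \<lfloor>\<rho> + real n * \<alpha>\<rfloor>"

lemma sturm_int:
  assumes "0 \<le> \<alpha>" "\<alpha> < 1"
  shows "int (sturmian \<rho> \<alpha> n) = Fl \<rho> \<alpha> (Suc n) - Fl \<rho> \<alpha> n"
proof -
  define x where "x = \<rho> + real n * \<alpha>"
  have e: "\<rho> + real (Suc n) * \<alpha> = of_int \<lfloor>x\<rfloor> + (frac x + \<alpha>)"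
    by (simp add: x_def frac_def algebra_simps)
  have "\<lfloor>\<rho> + real (Suc n) * \<alpha>\<rfloor> = \<lfloor>x\<rfloor> + \<lfloor>frac x + \<alpha>\<rfloor>"
    unfolding e by (simp add: add.commute)
  moreover have "\<lfloor>frac x + \<alpha>\<rfloor> = (if frac x < 1 - \<alpha> then 0 else 1)"
    using frac_ge_0[of x] frac_lt_1[of x] assms by (auto simp: floor_eq_iff)
  ultimately show ?thesis
    unfolding sturmian_def Fl_def x_def[symmetric] by auto
qed

lemma count1_sturm:
  assumes "0 \<le> \<alpha>" "\<alpha> < 1" "a \<le> b"
  shows "int (count_list (map (sturmian \<rho> \<alpha>) [a..<b]) 1) = Fl \<rho> \<alpha> b - Fl \<rho> \<alpha> a"
  using assms(3)
proof (induction b)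
  case 0 then show ?case by simp
next
  case (Suc b)
  show ?case
  proof (cases "a = Suc b")
    case True then show ?thesis by simp
  next
    case False
    hence ab: "a \<le> b" using Suc by simp
    have "sturmian \<rho> \<alpha> b = 0 \<or> sturmian \<rho> \<alpha> b = 1" by (simp add: sturmian_def)
    then show ?thesis using Suc.IH[OF ab] sturm_int[OF assms(1,2), of \<rho> b] ab
      by auto
  qed
qed

lemma sturm_letters: "set (map (sturmian \<rho> \<alpha>) xs) \<subseteq> {0,1}"
  by (auto simp: sturmian_def)

lemma len_count: "set u \<subseteq> {0::nat,1} \<Longrightarrow> length u = count_list u 0 + count_list u 1"
  by (induction u) auto

lemma count_concat: "count_list (concat xs) a = sum_list (map (\<lambda>x. count_list x a) xs)"
  by (induction xs) auto

lemma sum_list_const_on: "(\<forall>x\<in>set xs. f x = (k::nat)) \<Longrightarrow> sum_list (map f xs) = length xs * k"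
  by (induction xs) auto

lemma take_map_upt: "k \<le> L - r \<Longrightarrow> take k (drop r (map f [0..<L])) = map f [r..<r+k]"
proof -
  assume "k \<le> L - r"
  have "drop r (map f [0..<L]) = map f [r..<L]" by (simp add: drop_map)
  moreover have "take k (map f [r..<L]) = map f [r..<r+k]"
  proof (cases "k = 0")
    case False
    hence "r + k \<le> L" using \<open>k \<le> L - r\<close> by simp
    thus ?thesis by (simp add: take_map take_upt)
  qed simp
  ultimately show ?thesis by simp
qed

lemma decomp_extract:
  assumes ad: "abelian_decomposition (map (sturmian \<rho> \<alpha>) [0..<L]) us"
    and al: "0 \<le> \<alpha>" "\<alpha> < 1"
  shows "\<exists>r m c. r < length (us!1) \<and> 1 \<le> m \<and> r + m * length (us!1) \<le> L
     \<and> L < r + m * length (us!1) + length (us!1)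
     \<and> Fl \<rho> \<alpha> (r + m * length (us!1)) - Fl \<rho> \<alpha> r = int m * int c"
proof -
  define w where "w = map (sturmian \<rho> \<alpha>) [0..<L]"
  define p where "p = length (us!1)"
  define P where "P = parikh (us!1)"
  define n where "n = length us"
  have n3: "n \<ge> 3" and cw: "concat us = w"
    and mid: "\<And>j. 1 \<le> j \<Longrightarrow> j < n - 1 \<Longrightarrow> parikh (us!j) = P"
    and hdc: "parikh_contained (parikh (hd us)) P"
    and lac: "parikh_contained (parikh (last us)) P"
    using ad unfolding abelian_decomposition_def w_def[symmetric] P_def[symmetric] n_def[symmetric]
    by blast+
  have lw: "set w \<subseteq> {0,1}" unfolding w_def by (rule sturm_letters)
  have lu: "\<And>u. u \<in> set us \<Longrightarrow> set u \<subseteq> {0,1}"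
  proof -
    fix u assume "u \<in> set us"
    hence "set u \<subseteq> set (concat us)" by auto
    thus "set u \<subseteq> {0,1}" using lw cw by blast
  qed
  define mids where "mids = butlast (tl us)"
  have usne: "us \<noteq> []" using n3 n_def by auto
  have tlne: "tl us \<noteq> []" using n3 n_def by (cases us) auto
  have us_split: "us = hd us # mids @ [last us]"
  proof -
    have "tl us = butlast (tl us) @ [last (tl us)]" using tlne by simp
    moreover have "last (tl us) = last us" using tlne usne by (cases us) auto
    ultimately show ?thesis unfolding mids_def using usne by simp
  qed
  have lmids: "length mids = n - 2" unfolding mids_def n_def by simp
  have mids_nth: "\<And>i. i < length mids \<Longrightarrow> mids ! i = us ! (Suc i)"
    unfolding mids_def by (simp add: nth_butlast nth_tl)
  have us1: "us ! 1 \<in> set us" using n3 n_def by simp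
  have lenP: "p = fst P + snd P"
    unfolding p_def P_def parikh_def using len_count[OF lu[OF us1]] by simp
  have midP: "\<forall>x\<in>set mids. parikh x = P"
  proof
    fix x assume "x \<in> set mids"
    then obtain i where i: "i < length mids" "x = mids ! i" by (metis in_set_conv_nth)
    thus "parikh x = P" using mids_nth[OF i(1)] mid[of "Suc i"] lmids by simp
  qed
  have midL: "\<forall>x\<in>set mids. length x = p"
  proof
    fix x assume x: "x \<in> set mids"
    hence "x \<in> set us" using us_split by (metis Un_iff insert_iff list.set(2) set_append)
    hence "length x = count_list x 0 + count_list x 1" using len_count lu by blast
    thus "length x = p" using midP x lenP unfolding parikh_def by auto
  qed
  have midC: "\<forall>x\<in>set mids. count_list x 1 = snd P"
    using midP unfolding parikh_def by auto
  define r where "r = length (hd us)"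
  define t where "t = length (last us)"
  define m where "m = n - 2"
  have hd_in: "hd us \<in> set us" using usne by simp
  have la_in: "last us \<in> set us" using usne by simp
  have rp: "r < p"
  proof -
    have "r = count_list (hd us) 0 + count_list (hd us) 1"
      unfolding r_def using len_count lu[OF hd_in] by blast
    thus ?thesis using hdc lenP unfolding parikh_contained_def parikh_def
      by (cases P) auto
  qed
  have tp: "t < p"
  proof -
    have "t = count_list (last us) 0 + count_list (last us) 1"
      unfolding t_def using len_count lu[OF la_in] by blast
    thus ?thesis using lac lenP unfolding parikh_contained_def parikh_def
      by (cases P) auto
  qed
  have lcm: "length (concat mids) = m * p"
    unfolding length_concat using sum_list_const_on[OF midL] lmids m_def by simp
  have ccm: "count_list (concat mids) 1 = m * snd P"
    unfolding count_concat using sum_list_const_on[OF midC] lmids m_def by simp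
  have wsplit: "w = hd us @ concat mids @ last us"
  proof -
    have "concat us = concat (hd us # mids @ [last us])" using us_split by simp
    thus ?thesis using cw by simp
  qed
  have Lsum: "L = r + m * p + t"
  proof -
    have "length w = L" unfolding w_def by simp
    thus ?thesis using wsplit lcm unfolding r_def t_def by simp
  qed
  have "take (m * p) (drop r w) = concat mids"
    using wsplit lcm unfolding r_def by simp
  hence cm: "concat mids = map (sturmian \<rho> \<alpha>) [r..<r + m * p]"
  proof -
    have "m * p \<le> L - r" using Lsum by simp
    from take_map_upt[OF this, of "sturmian \<rho> \<alpha>"] show ?thesis
      using \<open>take (m * p) (drop r w) = concat mids\<close> unfolding w_def by simp
  qed
  have "Fl \<rho> \<alpha> (r + m * p) - Fl \<rho> \<alpha> r = int (m * snd P)"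
    using count1_sturm[OF al, of r "r + m*p" \<rho>] cm ccm by simp
  moreover have "1 \<le> m" using n3 m_def by simp
  ultimately show ?thesis using rp tp Lsum unfolding p_def[symmetric]
    by (intro exI[of _ r] exI[of _ m] exI[of _ "snd P"]) auto
qed



lemma polyA:
  fixes q q' M :: int
  assumes "M \<ge> 2*q' + 3" "q' \<ge> 1" "q \<ge> 1"
  shows "(M - 3) * q * (M - q') \<ge> q * q' * M"
proof -
  have h1: "M * (M - 3 - 2*q') \<ge> 0" using assms by (intro mult_nonneg_nonneg) auto
  have h2: "q * (M * (M - 3 - 2*q') + 3*q') \<ge> 0" using h1 assms by (intro mult_nonneg_nonneg) auto
  have "(M - 3) * q * (M - q') - q * q' * M = q * (M * (M - 3 - 2*q') + 3*q')"
    by (simp add: algebra_simps)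
  thus ?thesis using h2 by linarith
qed

lemma polyB:
  fixes q p M :: int
  assumes "M \<ge> 2*q + 1" "q \<ge> 2" "p \<le> 2*q - 1" "p \<ge> 1"
  shows "M * ((M+1)*q + 1 - 2*p) \<ge> p * (2*p - 1)"
proof -
  have a: "(M - 2*q - 1) * q \<ge> 0" using assms by (intro mult_nonneg_nonneg) auto
  have X: "(M+1)*q + 1 - 2*p \<ge> 2*q*q - 2*q + 3"
  proof -
    have "(M+1)*q + 1 - 2*p - (2*q*q - 2*q + 3) = (M - 2*q - 1) * q + (4*q - 2 - 2*p)"
      by (simp add: algebra_simps)
    thus ?thesis using a assms by linarith
  qed
  have qq: "q * (q - 1) \<ge> 0" using assms by (intro mult_nonneg_nonneg) auto
  have X0: "2*q*q - 2*q + 3 \<ge> 0" using qq by (simp add: algebra_simps)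
  have b: "M * ((M+1)*q + 1 - 2*p) \<ge> (2*q+1) * (2*q*q - 2*q + 3)"
    by (rule mult_mono) (use assms X X0 in auto)
  have c: "p * (2*p - 1) \<le> (2*q - 1) * (4*q - 3)"
    by (rule mult_mono) (use assms in auto)
  have d: "(2*q - 3) * (q - 1) \<ge> 0" using assms by (intro mult_nonneg_nonneg) auto
  have d2: "2*q*((2*q - 3) * (q - 1) + 4) \<ge> 0" using d assms by (intro mult_nonneg_nonneg) auto
  have "(2*q+1) * (2*q*q - 2*q + 3) - (2*q - 1) * (4*q - 3) = 2*q*((2*q - 3) * (q - 1) + 4)"
    by (simp add: algebra_simps)
  thus ?thesis using b c d2 by linarith
qed

lemma polyC:
  fixes q s v N q' :: int
  assumes "v \<ge> 2" "s \<le> q - 1" "N \<ge> 2*q + q' + 1" "q' \<ge> 1" "s = v * q'"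
  shows "v*(q*N + 1 - 2*(q+s)) - 2*(q+s)*q \<ge> 0"
proof -
  have "v * q' \<ge> 2 * 1" using assms by (intro mult_mono) auto
  hence q3: "q \<ge> 3" using assms by linarith
  have h1: "v*(q*N) \<ge> v*(q*(2*q + q' + 1))"
    using assms q3 by (intro mult_left_mono) auto
  have h2: "s*q \<le> (q - 1)*q" using assms q3 by (intro mult_right_mono) auto
  have h3: "v*s \<le> v*(q - 1)" using assms by (intro mult_left_mono) auto
  have h4: "(q - 2) * (q - 3) \<ge> 0" using q3 by (intro mult_nonneg_nonneg) auto
  have h5: "(v - 2) * (2*q*q - 3*q + 3) \<ge> 0"
  proof -
    have "q * (2*q - 3) \<ge> 0" using q3 by (intro mult_nonneg_nonneg) auto
    hence "2*q*q - 3*q + 3 \<ge> 0" by (simp add: algebra_simps)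
    thus ?thesis using assms by (intro mult_nonneg_nonneg) auto
  qed
  define A where "A = v*(q*N)"
  define B where "B = v*q*q"
  define C where "C = s*q"
  define E where "E = v*q"
  define F where "F = v*s"
  define G where "G = q*q"
  have e1: "v*(q*N + 1 - 2*(q+s)) - 2*(q+s)*q = A + v - 2*E - 2*F - 2*G - 2*C"
    unfolding A_def E_def F_def G_def C_def by (simp add: algebra_simps)
  have e2: "v*(q*(2*q + q' + 1)) = 2*B + C + E"
    using assms unfolding B_def C_def E_def by (simp add: algebra_simps)
  have e3: "(v - 2) * (2*q*q - 3*q + 3) + (q - 2) * (q - 3) = 2*B - 3*E + 3*v - 3*G + q"
    unfolding B_def E_def G_def by (simp add: algebra_simps)
  have e4: "(q - 1)*q = G - q" unfolding G_def by (simp add: algebra_simps)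
  have e5: "v*(q - 1) = E - v" unfolding E_def by (simp add: algebra_simps)
  have "A + v - 2*E - 2*F - 2*G - 2*C \<ge> 0"
    using e2 e3 e4 e5 h1 h2 h3 h4 h5 unfolding A_def[symmetric] C_def[symmetric] F_def[symmetric]
    by linarith
  thus ?thesis unfolding e1 .
qed

lemma polyD:
  fixes q p M :: int
  assumes "M \<ge> 2*q + 1" "q \<ge> 2" "p \<le> 2*q - 1" "p \<ge> 1"
  shows "2*((M+1)*q + 1 - 2*p) \<ge> p * q"
proof -
  have "(M+1)*q \<ge> (2*q+2)*q" using assms by (intro mult_right_mono) auto
  also have "(2*q+2)*q = 2*(q*q) + 2*q" by (simp add: algebra_simps)
  finally have a: "(M+1)*q \<ge> 2*(q*q) + 2*q" .
  have "p*q \<le> (2*q-1)*q" using assms by (intro mult_right_mono) auto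
  also have "(2*q-1)*q = 2*(q*q) - q" by (simp add: algebra_simps)
  finally have b: "p*q \<le> 2*(q*q) - q" .
  have c: "q*q \<ge> 2*q" using assms by (simp add: mult_right_mono)
  define G where "G = q*q"
  define H where "H = (M+1)*q"
  define PQ where "PQ = p*q"
  have "PQ \<le> 2*(H + 1 - 2*p)" using assms a b c unfolding G_def[symmetric] H_def[symmetric] PQ_def[symmetric] by smt
  thus ?thesis unfolding H_def PQ_def by simp
qed

lemma kill_ineq:
  fixes D D' :: real and q q' M p :: nat and u v :: int
  assumes qD: "real q * D' + real q' * D = 1" and Dpos: "0 < D"
    and MD: "real M * D \<le> 1" and MD1: "1 < (real M + 1) * D"
    and Mge: "M \<ge> 2*q + q'" and q'1: "q' \<ge> 1" and qq': "q \<ge> q' + 1"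
    and p1: "1 \<le> p" and p2: "p + 1 \<le> 2*q"
    and puv: "int p = u * int q + v * int q'"
    and not10: "\<not>(u = 1 \<and> v = 0)" and not11: "\<not>(u = 1 \<and> v = 1)"
  shows "real p * real q \<le> ((real M + 1) * real q + 1 - 2 * real p) * \<bar>real p * D - real_of_int v\<bar>"
proof -
  define X where "X = (real M + 1) * real q + 1 - 2 * real p"
  have q2: "q \<ge> 2" using q'1 qq' by simp
  have M5: "M \<ge> 2*q + 1" using Mge q'1 by simp
  have Xlow: "X \<ge> (real M - 3) * real q + 3"
    unfolding X_def using p2 by (simp add: algebra_simps)
  have Mq3: "(real M - 3) * real q \<ge> 0" using M5 q2 by (intro mult_nonneg_nonneg) auto
  have X0: "X \<ge> 0" using Xlow Mq3 by linarith
  have pD0: "real p * D \<ge> 0" using Dpos by simp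
  consider (vm2) "v \<le> -2" | (vm1) "v = -1" | (v0) "v = 0" | (vpu) "v \<ge> 1" "u \<le> 0"
    | (C) "v \<ge> 2" "u = 1" | (v1u1) "v = 1" "u = 1" | (big) "v \<ge> 1" "u \<ge> 2" by linarith
  thus ?thesis
  proof cases
    case vm2
    have "\<bar>real p * D - real_of_int v\<bar> \<ge> 2" using vm2 pD0 by linarith
    hence "X * \<bar>real p * D - real_of_int v\<bar> \<ge> X * 2" using X0 by (intro mult_left_mono) auto
    moreover have "2 * X \<ge> real p * real q"
    proof -
      have "2*((int M+1)*int q + 1 - 2*int p) \<ge> int p * int q"
        using polyD[of "int q" "int M" "int p"] M5 q2 p1 p2 by linarith
      hence "real_of_int (2*((int M+1)*int q + 1 - 2*int p)) \<ge> real_of_int (int p * int q)"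
        by (simp only: of_int_le_iff)
      thus ?thesis unfolding X_def by simp
    qed
    ultimately show ?thesis unfolding X_def by linarith
  next
    case vm1
    have ab: "\<bar>real p * D - real_of_int v\<bar> = 1 + real p * D" using vm1 pD0 by simp
    have XD: "X * D > real q + (1 - 2 * real p) * D"
    proof -
      have "X * D = ((real M + 1) * D) * real q + (1 - 2 * real p) * D"
        unfolding X_def by (simp add: algebra_simps)
      moreover have "((real M + 1) * D) * real q > 1 * real q"
        using MD1 q2 by (intro mult_strict_right_mono) auto
      ultimately show ?thesis by simp
    qed
    have pXD: "real p * (X * D) \<ge> real p * (real q + (1 - 2 * real p) * D)"
      using XD p1 by (intro mult_left_mono) auto
    have MX: "real M * X \<ge> real p * (2 * real p - 1)"
    proof -
      have "int M * ((int M+1)*int q + 1 - 2*int p) \<ge> int p * (2*int p - 1)"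
        using polyB[of "int q" "int M" "int p"] M5 q2 p1 p2 by linarith
      hence "real_of_int (int M * ((int M+1)*int q + 1 - 2*int p)) \<ge> real_of_int (int p * (2*int p - 1))"
        by (simp only: of_int_le_iff)
      thus ?thesis unfolding X_def by simp
    qed
    have "real p * (2 * real p - 1) * D \<le> real M * X * D"
      using MX Dpos by (intro mult_right_mono) auto
    also have "\<dots> = X * (real M * D)" by (simp add: algebra_simps)
    also have "\<dots> \<le> X * 1" using MD X0 by (intro mult_left_mono) auto
    finally have key: "real p * (2 * real p - 1) * D \<le> X" by simp
    have "X * (1 + real p * D) = X + real p * (X * D)" by (simp add: algebra_simps)
    also have "\<dots> \<ge> X + real p * (real q + (1 - 2 * real p) * D)" using pXD by linarith
    finally have "X * (1 + real p * D) \<ge> X + real p * real q - real p * (2 * real p - 1) * D"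
      by (simp add: algebra_simps)
    moreover have "X * \<bar>real p * D - real_of_int v\<bar> = X * (1 + real p * D)" using ab by simp
    ultimately show ?thesis using key unfolding X_def[symmetric] by linarith
  next
    case v0
    hence "int p = u * int q" using puv by simp
    moreover have "u \<noteq> 1" using v0 not10 by auto
    ultimately show ?thesis using p1 p2
    proof -
      assume a: "int p = u * int q" "u \<noteq> 1"
      have "u \<ge> 1"
      proof (rule ccontr)
        assume "\<not> u \<ge> 1" hence "u \<le> 0" by simp
        hence "u * int q \<le> 0" by (simp add: mult_nonpos_nonneg)
        thus False using a p1 by linarith
      qed
      hence "u \<ge> 2" using a by simp
      hence "u * int q \<ge> 2 * int q" by (intro mult_right_mono) auto
      thus ?thesis using a p2 by linarith
    qed
  next
    case vpu
    have pvq: "int p \<le> v * int q'"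
    proof -
      have "u * int q \<le> 0" using vpu by (simp add: mult_nonpos_nonneg)
      thus ?thesis using puv by linarith
    qed
    hence pvq': "real p \<le> real_of_int v * real q'"
      by (metis of_int_le_iff of_int_mult of_int_of_nat_eq)
    have ab: "\<bar>real p * D - real_of_int v\<bar> \<ge> real_of_int v * (1 - real q' * D)"
    proof -
      have "real p * D \<le> real_of_int v * real q' * D" using pvq' Dpos by (intro mult_right_mono) auto
      thus ?thesis by (simp add: algebra_simps)
    qed
    have A: "X * (1 - real q' * D) \<ge> real q * real q'"
    proof -
      have pA: "(int M - 3) * int q * (int M - int q') \<ge> int q * int q' * int M"
        using polyA[of "int q'" "int M" "int q"] M5 q'1 qq' by linarith
      hence pA': "(real M - 3) * real q * (real M - real q') \<ge> real q * real q' * real M"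
        by (metis (mono_tags, opaque_lifting) of_int_le_iff of_int_mult of_int_diff of_int_of_nat_eq of_int_numeral)
      have h1: "real M * (1 - real q' * D) \<ge> real M - real q'"
      proof -
        have "real q' * (real M * D) \<le> real q' * 1" using MD by (intro mult_left_mono) auto
        thus ?thesis by (simp add: algebra_simps)
      qed
      have Mq': "real M - real q' \<ge> 0" using Mge by simp
      have "X * (real M * (1 - real q' * D)) \<ge> X * (real M - real q')"
        using h1 X0 by (intro mult_left_mono) auto
      moreover have "X * (real M - real q') \<ge> ((real M - 3) * real q) * (real M - real q')"
        using Xlow Mq' by (intro mult_right_mono) auto
      ultimately have "real M * (X * (1 - real q' * D)) \<ge> real M * (real q * real q')"
        using pA' by (simp add: algebra_simps)
      moreover have "real M > 0" using M5 by simp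
      ultimately show ?thesis by simp
    qed
    have v0': "real_of_int v \<ge> 1" using vpu by simp
    have s1: "X * \<bar>real p * D - real_of_int v\<bar> \<ge> X * (real_of_int v * (1 - real q' * D))"
      using ab X0 by (intro mult_left_mono) auto
    have s2: "X * (real_of_int v * (1 - real q' * D)) = real_of_int v * (X * (1 - real q' * D))"
      by (simp add: algebra_simps)
    have s3: "real_of_int v * (X * (1 - real q' * D)) \<ge> real_of_int v * (real q * real q')"
      using A v0' by (intro mult_left_mono) auto
    have "X * \<bar>real p * D - real_of_int v\<bar> \<ge> real q * (real_of_int v * real q')"
      using s1 s2 s3 by (simp add: algebra_simps)
    moreover have "real q * (real_of_int v * real q') \<ge> real q * real p"
      using pvq' by (intro mult_left_mono) auto
    ultimately show ?thesis unfolding X_def by (simp add: algebra_simps)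
  next
    case C
    define s where "s = v * int q'"
    have ps: "int p = int q + s" using puv C s_def by simp
    have s2: "s \<ge> 2" using C q'1 s_def
      by (metis mult_mono' mult_1_right of_nat_0_le_iff of_nat_1 of_nat_le_iff order_trans one_le_numeral zero_le_numeral)
    have pC: "v*(int q*(int M + 1) + 1 - 2*(int q+s)) - 2*(int q+s)*int q \<ge> 0"
      using polyC[of v s "int q" "int q'" "int M + 1"] C s_def ps p2 Mge q'1 by linarith
    have pe': "real p = real q + real_of_int s" using ps by (metis of_int_add of_int_of_nat_eq)
    have eqR: "real_of_int (v*(int q*(int M + 1) + 1 - 2*(int q+s)) - 2*(int q+s)*int q)
       = real_of_int v * X - 2 * real p * real q"
      unfolding X_def pe' by (simp add: algebra_simps)
    have pC': "real_of_int v * X \<ge> 2 * real p * real q"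
      using pC eqR by (metis diff_ge_0_iff_ge of_int_0_le_iff)
    have XD: "X * D \<le> real q - real q * D"
    proof -
      have "X * D = real q * (real M * D) + (real q + 1 - 2 * real p) * D"
        unfolding X_def by (simp add: algebra_simps)
      moreover have "real q * (real M * D) \<le> real q * 1" using MD by (intro mult_left_mono) auto
      moreover have "(real q + 1 - 2 * real p) * D \<le> (- real q) * D"
        using ps s2 Dpos by (intro mult_right_mono) auto
      ultimately show ?thesis by (simp add: algebra_simps)
    qed
    have ab: "\<bar>real p * D - real_of_int v\<bar> \<ge> real_of_int v - real p * D" by linarith
    have t1: "X * \<bar>real p * D - real_of_int v\<bar> \<ge> X * (real_of_int v - real p * D)"
      using ab X0 by (intro mult_left_mono) auto
    have t2: "X * (real_of_int v - real p * D) = real_of_int v * X - real p * (X * D)"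
      by (simp add: algebra_simps)
    have t3: "real p * (X * D) \<le> real p * (real q - real q * D)"
      using XD by (intro mult_left_mono) auto
    have "X * \<bar>real p * D - real_of_int v\<bar> \<ge> 2 * real p * real q - real p * (real q - real q * D)"
      using pC' t1 t2 t3 by linarith
    moreover have "real p * (real q * D) \<ge> 0" using Dpos by simp
    ultimately show ?thesis unfolding X_def[symmetric] by (simp add: algebra_simps)
  next
    case v1u1 then show ?thesis using not11 by simp
  next
    case big
    have "u * int q \<ge> 2 * int q" using big by (intro mult_right_mono) auto
    moreover have "v * int q' \<ge> 1 * int q'" using big by (intro mult_right_mono) auto
    ultimately show ?thesis using puv p2 q'1 by linarith
  qed
qed



lemma a1_ge2:
  assumes "0 < \<alpha>" "\<alpha> < 1/2" "\<alpha> \<notin> \<rat>"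
  shows "cf_a \<alpha> 1 \<ge> 2"
proof -
  have a: "0 < \<alpha>" "\<alpha> < 1" "\<alpha> \<notin> \<rat>" using assms by auto
  have "1 / \<alpha> > 2" using assms by (simp add: field_simps)
  hence "real (cf_a \<alpha> (Suc 0)) \<ge> 2" using cf_a_real[OF a, of 0] by simp
  thus ?thesis by simp
qed

lemma q_grow:
  assumes "0 < \<alpha>" "\<alpha> < 1/2" "\<alpha> \<notin> \<rat>"
  shows "cf_q \<alpha> n \<ge> 1 \<and> cf_q \<alpha> (Suc n) \<ge> cf_q \<alpha> n + 1"
proof (induction n)
  case 0 then show ?case using a1_ge2[OF assms] by simp
next
  case (Suc n)
  have a: "0 < \<alpha>" "\<alpha> < 1" "\<alpha> \<notin> \<rat>" using assms by auto
  have "cf_a \<alpha> (Suc (Suc n)) \<ge> 1" using cf_a_ge1[OF a, of "Suc n"] by simp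
  hence "cf_a \<alpha> (Suc (Suc n)) * cf_q \<alpha> (Suc n) \<ge> 1 * cf_q \<alpha> (Suc n)"
    by (intro mult_right_mono) auto
  moreover have "cf_q \<alpha> (Suc (Suc n)) = cf_a \<alpha> (Suc (Suc n)) * cf_q \<alpha> (Suc n) + cf_q \<alpha> n" by simp
  ultimately show ?case using Suc by linarith
qed

lemma R_le:
  assumes "0 < \<alpha>" "\<alpha> < 1" "\<alpha> \<notin> \<rat>"
  shows "R \<alpha> n \<le> \<alpha>"
proof (induction n)
  case 0 then show ?case by simp
next
  case (Suc n)
  have "R \<alpha> (Suc n) = R \<alpha> n * cf_r \<alpha> (Suc n)" by (rule R_Suc)
  also have "\<dots> \<le> R \<alpha> n * 1"
    using cf_r_bounds[OF assms, of "Suc n"] R_pos[OF assms, of n] by (intro mult_left_mono) auto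
  finally show ?case using Suc by simp
qed

lemma floor_diff_bound:
  fixes a b :: real
  assumes "\<lfloor>a + b\<rfloor> - \<lfloor>a\<rfloor> = n"
  shows "\<bar>b - real_of_int n\<bar> < 1"
proof -
  have "real_of_int \<lfloor>a + b\<rfloor> \<le> a + b" "a + b < real_of_int \<lfloor>a + b\<rfloor> + 1"
    "real_of_int \<lfloor>a\<rfloor> \<le> a" "a < real_of_int \<lfloor>a\<rfloor> + 1" by linarith+
  moreover have "real_of_int \<lfloor>a + b\<rfloor> = real_of_int \<lfloor>a\<rfloor> + real_of_int n" using assms by simp
  ultimately show ?thesis by linarith
qed

lemma uv_repr:
  fixes q q' pk pk' p :: nat and c \<Delta> :: int and \<alpha> D D' s :: real
  assumes e1: "real q * \<alpha> - real pk = s * D" and e2: "real q' * \<alpha> - real pk' = - s * D'"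
    and det: "int q * int pk' - int pk * int q' = \<Delta>" and dd: "\<Delta> * \<Delta> = 1"
    and qD: "real q * D' + real q' * D = 1"
  shows "\<exists>u v. int p = u * int q + v * int q' \<and> c = u * int pk + v * int pk'
     \<and> real q * (real p * \<alpha> - real_of_int c) = s * (real p * D - real_of_int v)"
proof -
  define u where "u = \<Delta> * (int p * int pk' - c * int q')"
  define v where "v = \<Delta> * (c * int q - int p * int pk)"
  have h1: "u * int q + v * int q' = \<Delta> * int p * (int q * int pk' - int pk * int q')"
    unfolding u_def v_def by (simp add: algebra_simps)
  hence i1: "int p = u * int q + v * int q'" using det dd by (simp add: algebra_simps)
  have h2: "u * int pk + v * int pk' = \<Delta> * c * (int q * int pk' - int pk * int q')"
    unfolding u_def v_def by (simp add: algebra_simps)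
  hence i2: "c = u * int pk + v * int pk'" using det dd by (simp add: algebra_simps)
  have r1: "real p = real_of_int u * real q + real_of_int v * real q'"
    using arg_cong[OF i1, of real_of_int] by simp
  have r2: "real_of_int c = real_of_int u * real pk + real_of_int v * real pk'"
    using arg_cong[OF i2, of real_of_int] by simp
  have "real p * \<alpha> - real_of_int c
      = real_of_int u * (real q * \<alpha> - real pk) + real_of_int v * (real q' * \<alpha> - real pk')"
    unfolding r1 r2 by (simp add: algebra_simps)
  also have "\<dots> = s * (real_of_int u * D - real_of_int v * D')"
    unfolding e1 e2 by (simp add: algebra_simps)
  finally have E: "real p * \<alpha> - real_of_int c = s * (real_of_int u * D - real_of_int v * D')" .
  have "real q * (real p * \<alpha> - real_of_int c)
      = s * (real_of_int u * real q * D - real_of_int v * (real q * D'))"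
    unfolding E by (simp add: algebra_simps)
  also have "real q * D' = 1 - real q' * D" using qD by simp
  finally have "real q * (real p * \<alpha> - real_of_int c) = s * (real p * D - real_of_int v)"
    unfolding r1 by (simp add: algebra_simps)
  thus ?thesis using i1 i2 by blast
qed



lemma upt_split: "i \<le> j \<Longrightarrow> j \<le> k \<Longrightarrow> [i..<k] = [i..<j] @ [j..<k]"
  using upt_add_eq_append[of i j "k - j"] by simp

lemma concat_blocks:
  "concat (map (\<lambda>i. map f [a + b*i..<a + b*(Suc i)]) [0..<m]) = map f [a..<a + b*m]"
proof (induction m)
  case 0 then show ?case by simp
next
  case (Suc m)
  have "[a..<a + b*(Suc m)] = [a..<a + b*m] @ [a + b*m..<a + b*(Suc m)]"
    by (rule upt_split) auto
  then show ?case using Suc by simp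
qed

lemma parikh_seg:
  assumes "0 \<le> \<alpha>" "\<alpha> < 1" "a \<le> b"
  shows "int (snd (parikh (map (sturmian \<rho> \<alpha>) [a..<b]))) = Fl \<rho> \<alpha> b - Fl \<rho> \<alpha> a"
    and "int (fst (parikh (map (sturmian \<rho> \<alpha>) [a..<b]))) = int (b - a) - (Fl \<rho> \<alpha> b - Fl \<rho> \<alpha> a)"
proof -
  have c1: "int (count_list (map (sturmian \<rho> \<alpha>) [a..<b]) 1) = Fl \<rho> \<alpha> b - Fl \<rho> \<alpha> a"
    by (rule count1_sturm[OF assms])
  have "length (map (sturmian \<rho> \<alpha>) [a..<b]) = count_list (map (sturmian \<rho> \<alpha>) [a..<b]) 0 + count_list (map (sturmian \<rho> \<alpha>) [a..<b]) 1"
    by (rule len_count[OF sturm_letters])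
  hence "count_list (map (sturmian \<rho> \<alpha>) [a..<b]) 0 = (b - a) - count_list (map (sturmian \<rho> \<alpha>) [a..<b]) 1"
    by simp
  moreover have "count_list (map (sturmian \<rho> \<alpha>) [a..<b]) 1 \<le> b - a"
    by (metis count_le_length length_map length_upt)
  ultimately show "int (fst (parikh (map (sturmian \<rho> \<alpha>) [a..<b]))) = int (b - a) - (Fl \<rho> \<alpha> b - Fl \<rho> \<alpha> a)"
    using c1 unfolding parikh_def by simp
  show "int (snd (parikh (map (sturmian \<rho> \<alpha>) [a..<b]))) = Fl \<rho> \<alpha> b - Fl \<rho> \<alpha> a"
    using c1 unfolding parikh_def by simp
qed

lemma contained_int:
  assumes "int (fst X) \<le> int (fst Y)" "int (snd X) \<le> int (snd Y)"
    "int (fst X) + int (snd X) \<noteq> int (fst Y) + int (snd Y)"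
  shows "parikh_contained X Y"
  using assms unfolding parikh_contained_def by auto

lemma construct_2q:
  fixes \<alpha> \<rho> :: real and q pk M L :: nat and \<delta> :: int
  assumes al: "0 \<le> \<alpha>" "\<alpha> < 1"
    and FJ: "\<And>j. j \<le> M - 1 \<Longrightarrow> Fl \<rho> \<alpha> (j * q) = int j * int pk"
    and FL: "Fl \<rho> \<alpha> L = int (M+1) * int pk + \<delta>" and dl: "\<delta> = 0 \<or> \<delta> = -1"
    and Ldef: "L = (M+1)*q - 1" and M5: "M \<ge> 5" and q1: "q \<ge> 1"
  shows "abelian_period (map (sturmian \<rho> \<alpha>) [0..<L]) (2*q)"
proof -
  define s where "s = sturmian \<rho> \<alpha>"
  define e where "e = (if odd M then 0 else 1::nat)"
  define r0 where "r0 = e * q"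
  define m0 where "m0 = (M - 1 - e) div 2"
  have em: "e + 2 * m0 = M - 1" using M5 unfolding e_def m0_def by auto
  have e1: "e \<le> 1" unfolding e_def by simp
  have m01: "m0 \<ge> 1" using M5 em e1 by linarith
  have r0m: "r0 + 2*q*m0 = (M - 1) * q" unfolding r0_def using em
    by (metis add_mult_distrib mult.commute mult.left_commute)
  define blocks where "blocks = map (\<lambda>i. map s [r0 + 2*q*i..<r0 + 2*q*(Suc i)]) [0..<m0]"
  define us where "us = map s [0..<r0] # blocks @ [map s [(M-1)*q..<L]]"
  have lenb: "length blocks = m0" by (simp add: blocks_def)
  have lenus: "length us = m0 + 2" by (simp add: us_def lenb)
  have B: "(M+1)*q = (M-1)*q + 2*q"
  proof -
    obtain M' where "M = Suc M'" using M5 by (cases M) auto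
    thus ?thesis by (simp add: algebra_simps)
  qed
  have MleL: "(M - 1) * q \<le> L" using B Ldef q1 by linarith
  have Lsub: "L - (M-1)*q = 2*q - 1" using B Ldef q1 by linarith
  have cc: "concat us = map s [0..<L]"
  proof -
    have "concat blocks = map s [r0..<r0 + 2*q*m0]" unfolding blocks_def by (rule concat_blocks)
    hence "concat us = map s [0..<r0] @ map s [r0..<(M-1)*q] @ map s [(M-1)*q..<L]"
      unfolding us_def using r0m by simp
    also have "\<dots> = map s [0..<L]"
    proof -
      have "r0 \<le> (M-1)*q" using r0m by simp
      hence "[0..<r0] @ [r0..<(M-1)*q] @ [(M-1)*q..<L] = [0..<L]"
      proof -
        assume a: "r0 \<le> (M-1)*q"
        have "[0..<L] = [0..<(M-1)*q] @ [(M-1)*q..<L]" using MleL by (intro upt_split) auto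
        moreover have "[0..<(M-1)*q] = [0..<r0] @ [r0..<(M-1)*q]" using a by (intro upt_split) auto
        ultimately show ?thesis by simp
      qed
      thus ?thesis by (metis map_append)
    qed
    finally show ?thesis .
  qed
  have FJ': "\<And>j. j \<le> M - 1 \<Longrightarrow> Fl \<rho> \<alpha> (j * q) = int j * int pk" using FJ by blast
  have blockP: "\<And>i. i < m0 \<Longrightarrow> int (snd (parikh (blocks ! i))) = 2 * int pk
       \<and> int (fst (parikh (blocks ! i))) = 2 * int q - 2 * int pk"
  proof -
    fix i assume i: "i < m0"
    have b: "blocks ! i = map s [(e + 2*i) * q..<(e + 2*(Suc i)) * q]"
      unfolding blocks_def r0_def using i by (simp add: algebra_simps)
    have j1: "e + 2*(Suc i) \<le> M - 1" using i em by simp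
    have j0: "e + 2*i \<le> M - 1" using j1 by simp
    have f1: "Fl \<rho> \<alpha> ((e + 2*i) * q) = int (e + 2*i) * int pk" by (rule FJ'[OF j0])
    have f2: "Fl \<rho> \<alpha> ((e + 2*(Suc i)) * q) = int (e + 2*(Suc i)) * int pk" by (rule FJ'[OF j1])
    have le: "(e + 2*i) * q \<le> (e + 2*(Suc i)) * q" by simp
    have ln: "(e + 2*(Suc i)) * q - (e + 2*i) * q = 2*q" by (simp add: algebra_simps)
    show "int (snd (parikh (blocks ! i))) = 2 * int pk \<and> int (fst (parikh (blocks ! i))) = 2 * int q - 2 * int pk"
      unfolding b s_def using parikh_seg[OF al le, of \<rho>] f1 f2 ln by (simp add: algebra_simps)
  qed
  have us1: "us ! 1 = blocks ! 0" unfolding us_def using m01 lenb by (simp add: nth_append)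
  have len1: "length (us ! 1) = 2*q"
    unfolding us1 blocks_def using m01 by (simp add: algebra_simps)
  have P1: "int (snd (parikh (us ! 1))) = 2 * int pk" "int (fst (parikh (us ! 1))) = 2 * int q - 2 * int pk"
    using blockP[of 0] m01 us1 by auto
  have mid: "\<forall>j. 1 \<le> j \<and> j < length us - 1 \<longrightarrow> parikh (us ! j) = parikh (us ! 1)"
  proof (intro allI impI)
    fix j assume j: "1 \<le> j \<and> j < length us - 1"
    have jm: "j - 1 < m0" using j lenus by linarith
    have "us ! j = blocks ! (j - 1)" unfolding us_def using lenb lenus j jm
      by (simp add: nth_append nth_Cons')
    moreover note jm
    ultimately have "int (snd (parikh (us ! j))) = 2 * int pk" "int (fst (parikh (us ! j))) = 2 * int q - 2 * int pk"
      using blockP[of "j-1"] by auto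
    thus "parikh (us ! j) = parikh (us ! 1)" using P1 by (simp add: prod_eq_iff)
  qed
  have hdP: "parikh_contained (parikh (hd us)) (parikh (us ! 1))"
  proof -
    have h: "hd us = map s [0..<e*q]" unfolding us_def r0_def by simp
    have f0: "Fl \<rho> \<alpha> 0 = 0" using FJ'[of 0] by simp
    have fe: "Fl \<rho> \<alpha> (e*q) = int e * int pk" using FJ' em by simp
    have A: "int (snd (parikh (hd us))) = int e * int pk"
      "int (fst (parikh (hd us))) = int e * int q - int e * int pk"
      unfolding h s_def using parikh_seg[OF al, of 0 "e*q" \<rho>] f0 fe by (simp_all add: of_nat_mult)
    have "int e * int pk \<le> 2 * int pk" using e1 by (simp add: mult_right_mono)
    moreover have "int e * int q - int e * int pk \<le> 2 * int q - 2 * int pk"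
    proof -
      have "int (fst (parikh (us ! 1))) \<ge> 0" by simp
      hence "int pk \<le> int q" using P1 by simp
      moreover have "e = 0 \<or> e = 1" using e1 by auto
      ultimately show ?thesis by (elim disjE) simp_all
    qed
    moreover have "int e * int q \<noteq> 2 * int q" using e1 q1 by (cases "e = 0") auto
    ultimately show ?thesis using A P1 by (intro contained_int) auto
  qed
  have laP: "parikh_contained (parikh (last us)) (parikh (us ! 1))"
  proof -
    have h: "last us = map s [(M-1)*q..<L]" unfolding us_def by simp
    have fm: "Fl \<rho> \<alpha> ((M-1)*q) = int (M-1) * int pk" using FJ' by simp
    have "int (M+1) * int pk + \<delta> - int (M-1) * int pk = 2 * int pk + \<delta>"
      using M5 by (simp add: algebra_simps of_nat_diff)
    hence A: "int (snd (parikh (last us))) = 2 * int pk + \<delta>"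
      "int (fst (parikh (last us))) = int (2*q - 1) - (2 * int pk + \<delta>)"
      unfolding h s_def using parikh_seg[OF al MleL, of \<rho>] fm FL Lsub by simp_all
    have "int (2*q - 1) = 2 * int q - 1" using q1 by simp
    hence A2: "int (fst (parikh (last us))) = 2 * int q - 1 - 2 * int pk - \<delta>" using A(2) by simp
    show ?thesis
    proof (rule contained_int)
      show "int (fst (parikh (last us))) \<le> int (fst (parikh (us ! 1)))"
        using A2 P1(2) dl by linarith
      show "int (snd (parikh (last us))) \<le> int (snd (parikh (us ! 1)))"
        using A(1) P1(1) dl by linarith
      show "int (fst (parikh (last us))) + int (snd (parikh (last us))) \<noteq>
            int (fst (parikh (us ! 1))) + int (snd (parikh (us ! 1)))"
        using A(1) A2 P1 by linarith
    qed
  qed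
  have AD: "abelian_decomposition (map s [0..<L]) us"
    unfolding abelian_decomposition_def
  proof (intro conjI)
    show "3 \<le> length us" using lenus m01 by linarith
  qed (fact cc mid hdP laP)+
  have "abelian_period (map s [0..<L]) (2*q)" unfolding abelian_period_def using AD len1 by blast
  thus ?thesis unfolding s_def .
qed



lemma best_approx:
  fixes q q' pk pk' r :: nat and z \<Delta> :: int and \<alpha> D D' s :: real
  assumes e1: "real q * \<alpha> - real pk = s * D" and e2: "real q' * \<alpha> - real pk' = - s * D'"
    and det: "int q * int pk' - int pk * int q' = \<Delta>" and dd: "\<Delta> * \<Delta> = 1"
    and qD: "real q * D' + real q' * D = 1" and s1: "\<bar>s\<bar> = 1"
    and Dpos: "0 < D" and D'pos: "0 < D'" and q'1: "q' \<ge> 1"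
    and r0: "0 < r" and rq: "r < q"
  shows "\<bar>real r * \<alpha> - real_of_int z\<bar> \<ge> D'"
proof -
  obtain u v where uv: "int r = u * int q + v * int q'"
    and eq: "real q * (real r * \<alpha> - real_of_int z) = s * (real r * D - real_of_int v)"
    using uv_repr[OF e1 e2 det dd qD, of r z] by blast
  have abs_eq: "real q * \<bar>real r * \<alpha> - real_of_int z\<bar> = \<bar>real r * D - real_of_int v\<bar>"
  proof -
    have "\<bar>real q * (real r * \<alpha> - real_of_int z)\<bar> = \<bar>s\<bar> * \<bar>real r * D - real_of_int v\<bar>"
      unfolding eq by (simp add: abs_mult)
    thus ?thesis using s1 by (simp add: abs_mult)
  qed
  have q'D: "real q' * D < 1" using qD rq D'pos
    by (smt (verit) mult_pos_pos of_nat_0_less_iff r0 gr0I less_nat_zero_code)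
  have key: "\<bar>real r * D - real_of_int v\<bar> \<ge> 1 - real q' * D"
  proof -
    consider (a) "v \<le> -1" | (b) "v = 0" | (c) "v \<ge> 1" by linarith
    thus ?thesis
    proof cases
      case a
      have "real r * D \<ge> 0" using Dpos by simp
      moreover have "real_of_int v \<le> -1" using a by simp
      moreover have "real q' * D \<ge> 0" using Dpos by simp
      ultimately show ?thesis by linarith
    next
      case b
      hence h: "int r = u * int q" using uv by simp
      have False
      proof (cases "u \<le> 0")
        case True
        hence "int r \<le> 0" using h by (simp add: mult_nonpos_nonneg)
        thus False using r0 by simp
      next
        case False
        hence "u * int q \<ge> 1 * int q" by (intro mult_right_mono) auto
        thus False using h rq by linarith
      qed
      thus ?thesis ..
    next
      case c
      have u0: "u \<le> 0"
      proof (rule ccontr)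
        assume "\<not> u \<le> 0"
        hence "u * int q \<ge> 1 * int q" by (intro mult_right_mono) auto
        moreover have "v * int q' \<ge> 0" using c by simp
        ultimately show False using uv rq by linarith
      qed
      have "u * int q \<le> 0" using u0 by (simp add: mult_nonpos_nonneg)
      hence "int r \<le> v * int q'" using uv by linarith
      hence rv: "real r \<le> real_of_int v * real q'"
        by (metis of_int_le_iff of_int_mult of_int_of_nat_eq)
      have "real r * D \<le> real_of_int v * real q' * D" using rv Dpos by (intro mult_right_mono) auto
      moreover have "real_of_int v * (1 - real q' * D) \<ge> 1 * (1 - real q' * D)"
        using c q'D by (intro mult_right_mono) auto
      ultimately show ?thesis by (simp add: algebra_simps)
    qed
  qed
  have "real q * \<bar>real r * \<alpha> - real_of_int z\<bar> \<ge> real q * D'"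
    using abs_eq key qD by simp
  moreover have "real q > 0" using rq by simp
  ultimately show ?thesis by simp
qed



theorem proposition5p7:
  fixes \<alpha> :: real and k :: nat
  assumes "0 < \<alpha>" and "\<alpha> < 1/2" and "\<alpha> \<notin> \<rat>"
    and "k \<ge> 1" and "cf_a \<alpha> (k + 1) > 1"
  shows "\<exists>w \<in> factors_slope \<alpha>.
           min_abelian_period w = cf_q \<alpha> k + cf_q \<alpha> (k - 1) \<or>
           min_abelian_period w = 2 * cf_q \<alpha> k"
proof -
  obtain j where kj: "k = Suc j" using \<open>k \<ge> 1\<close> by (cases k) auto
  have al: "0 < \<alpha>" "\<alpha> < 1" "\<alpha> \<notin> \<rat>" using assms by auto
  have al2: "0 < \<alpha>" "\<alpha> < 1/2" "\<alpha> \<notin> \<rat>" using assms by auto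
  define q where "q = cf_q \<alpha> k"
  define q' where "q' = cf_q \<alpha> j"
  define pk where "pk = cf_p \<alpha> k"
  define pk' where "pk' = cf_p \<alpha> j"
  define D where "D = R \<alpha> k"
  define D' where "D' = R \<alpha> j"
  define D'' where "D'' = R \<alpha> (Suc k)"
  define a where "a = cf_a \<alpha> (k+1)"
  define Q where "Q = cf_q \<alpha> (Suc k)"
  have Dpos: "0 < D" "0 < D'" "0 < D''" using R_pos[OF al] unfolding D_def D'_def D''_def by auto
  have qD: "real q * D' + real q' * D = 1"
    using qR[OF al, of j] unfolding q_def q'_def D_def D'_def kj by simp
  have QD: "real Q * D + real q * D'' = 1"
    using qR[OF al, of k] unfolding Q_def q_def D_def D''_def by simp
  have Drec: "D' = real a * D + D''"
    using R_rec[OF al, of j] unfolding D_def D'_def D''_def a_def kj by (simp add: numeral_2_eq_2)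
  have a2: "a \<ge> 2" using assms(5) unfolding a_def by simp
  have Qdef: "Q = a * q + q'" unfolding Q_def a_def q_def q'_def kj by (simp add: numeral_2_eq_2)
  have e1: "real q * \<alpha> - real pk = (-1)^k * D"
    using eR[OF al, of k] unfolding q_def pk_def D_def by blast
  have e2: "real q' * \<alpha> - real pk' = (-1)^j * D'"
    using eR[OF al, of j] unfolding q'_def pk'_def D'_def by blast
  have det0: "int q * int pk' - int pk * int q' = (-1)^k"
    using det[of \<alpha> j] unfolding q_def pk'_def pk_def q'_def kj by simp
  define s where "s = ((-1)^k :: real)"
  define \<Delta> where "\<Delta> = ((-1)^k :: int)"
  have s1: "\<bar>s\<bar> = 1" unfolding s_def by simp
  have e1': "real q * \<alpha> - real pk = s * D" using e1 unfolding s_def .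
  have e2': "real q' * \<alpha> - real pk' = - s * D'" using e2 unfolding s_def kj by simp
  have dd: "\<Delta> * \<Delta> = 1" unfolding \<Delta>_def by (simp add: power_mult_distrib[symmetric])
  have det': "int q * int pk' - int pk * int q' = \<Delta>" using det0 unfolding \<Delta>_def .
  have qg: "q' \<ge> 1" "q \<ge> q' + 1" using q_grow[OF al2, of j] unfolding q_def q'_def kj by auto
  have D'le: "D' \<le> \<alpha>" using R_le[OF al] unfolding D'_def by blast
  have D2: "D' > 2 * D"
  proof -
    have "real a * D \<ge> 2 * D" using a2 Dpos by (intro mult_right_mono) auto
    thus ?thesis using Drec Dpos by linarith
  qed
  have Dlt: "2 * D < \<alpha>" "D < \<alpha>" using D2 D'le Dpos by linarith+
  define M where "M = nat \<lfloor>1 / D\<rfloor>"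
  have Mr: "real M = of_int \<lfloor>1 / D\<rfloor>" unfolding M_def using Dpos by simp
  have MD: "real M * D \<le> 1"
  proof -
    have "real M \<le> 1 / D" using Mr by simp
    thus ?thesis using Dpos by (simp add: field_simps)
  qed
  have MD1: "1 < (real M + 1) * D"
  proof -
    have "1 / D < real M + 1" using Mr by linarith
    thus ?thesis using Dpos by (simp add: field_simps)
  qed
  have QM: "Q \<le> M"
  proof -
    have "real q * D'' > 0" using Dpos qg by simp
    hence "real Q * D < 1" using QD by linarith
    hence "real Q \<le> 1 / D" using Dpos by (simp add: field_simps)
    hence "int Q \<le> \<lfloor>1 / D\<rfloor>" by (simp add: le_floor_iff)
    thus ?thesis unfolding M_def by simp
  qed
  have Mge: "M \<ge> 2*q + q'"
  proof -
    have "a * q \<ge> 2 * q" using a2 by (intro mult_right_mono) auto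
    thus ?thesis using QM Qdef by linarith
  qed
  have q2: "q \<ge> 2" using qg by simp
  have M5: "M \<ge> 5" using Mge qg by simp
  define \<rho> where "\<rho> = (if even k then 1 - real M * D else (real M - 1) * D)"
  define L where "L = (M+1)*q - 1"
  define w where "w = map (sturmian \<rho> \<alpha>) [0..<L]"
  have MDpos: "real M * D > 0" using M5 Dpos by simp
  have \<rho>01: "0 \<le> \<rho>" "\<rho> < 1"
  proof -
    have "(real M - 1) * D \<ge> 0" using M5 Dpos by simp
    moreover have "(real M - 1) * D < 1" using MD Dpos by (simp add: algebra_simps)
    ultimately show "0 \<le> \<rho>" "\<rho> < 1" unfolding \<rho>_def using MD MDpos by auto
  qed
  have wF: "w \<in> factors_slope \<alpha>"
    unfolding factors_slope_def w_def using \<rho>01 by (intro CollectI exI[of _ \<rho>] exI[of _ 0]) simp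
  have qa: "real q * \<alpha> = real pk + s * D" using e1' by simp
  have FJ: "\<And>j'. j' \<le> M - 1 \<Longrightarrow> Fl \<rho> \<alpha> (j' * q) = int j' * int pk"
  proof -
    fix j' assume j': "j' \<le> M - 1"
    have "real (j' * q) * \<alpha> = real j' * (real q * \<alpha>)" by simp
    also have "\<dots> = real j' * (real pk + s * D)" using qa by simp
    finally have eq: "\<rho> + real (j' * q) * \<alpha> = (\<rho> + real j' * (s * D)) + real_of_int (int j' * int pk)"
      by (simp add: algebra_simps)
    have b: "0 \<le> \<rho> + real j' * (s * D) \<and> \<rho> + real j' * (s * D) < 1"
    proof (cases "even k")
      case True
      hence "s = 1" unfolding s_def by simp
      moreover have "(real M - real j') * D > 0" using j' M5 Dpos by (simp add: of_nat_diff)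
      moreover have "(real M - real j') * D \<le> real M * D" using Dpos by (simp add: algebra_simps)
      ultimately show ?thesis using True MD unfolding \<rho>_def by (simp add: algebra_simps)
    next
      case False
      hence "s = -1" unfolding s_def by simp
      moreover have "(real M - 1 - real j') * D \<ge> 0" using j' M5 Dpos by (simp add: of_nat_diff)
      moreover have "(real M - 1 - real j') * D \<le> (real M - 1) * D" using Dpos by (simp add: algebra_simps)
      moreover have "(real M - 1) * D < 1" using MD Dpos by (simp add: algebra_simps)
      ultimately show ?thesis using False unfolding \<rho>_def by (simp add: algebra_simps)
    qed
    have "\<lfloor>\<rho> + real j' * (s * D)\<rfloor> = 0" using b by (simp add: floor_eq_iff)
    hence "\<lfloor>(\<rho> + real j' * (s * D)) + real_of_int (int j' * int pk)\<rfloor> = int j' * int pk"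
      using floor_add_int[of "\<rho> + real j' * (s * D)" "int j' * int pk"] by simp
    thus "Fl \<rho> \<alpha> (j' * q) = int j' * int pk" unfolding Fl_def eq .
  qed
  define \<delta> where "\<delta> = (if even k then 0 else -1::int)"
  have Lr: "real L = (real M + 1) * real q - 1" unfolding L_def using q2 by (simp add: of_nat_diff algebra_simps)
  have FL: "Fl \<rho> \<alpha> L = int (M+1) * int pk + \<delta>"
  proof -
    have "real L * \<alpha> = (real M + 1) * (real q * \<alpha>) - \<alpha>" unfolding Lr by (simp add: algebra_simps)
    also have "\<dots> = (real M + 1) * (real pk + s * D) - \<alpha>" using qa by simp
    finally have eq: "\<rho> + real L * \<alpha> = (\<rho> + (real M + 1) * (s * D) - \<alpha>) + real_of_int (int (M+1) * int pk)"
      by (simp add: algebra_simps)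
    have b: "real_of_int \<delta> \<le> \<rho> + (real M + 1) * (s * D) - \<alpha> \<and> \<rho> + (real M + 1) * (s * D) - \<alpha> < real_of_int \<delta> + 1"
    proof (cases "even k")
      case True
      hence "s = 1" unfolding s_def by simp
      thus ?thesis using True Dlt Dpos al unfolding \<rho>_def \<delta>_def by (simp add: algebra_simps)
    next
      case False
      hence "s = -1" unfolding s_def by simp
      thus ?thesis using False Dlt Dpos al assms(2) unfolding \<rho>_def \<delta>_def by (simp add: algebra_simps)
    qed
    have "\<lfloor>\<rho> + (real M + 1) * (s * D) - \<alpha>\<rfloor> = \<delta>" using b by (simp add: floor_eq_iff)
    hence "\<lfloor>(\<rho> + (real M + 1) * (s * D) - \<alpha>) + real_of_int (int (M+1) * int pk)\<rfloor> = \<delta> + int (M+1) * int pk"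
      using floor_add_int[of "\<rho> + (real M + 1) * (s * D) - \<alpha>" "int (M+1) * int pk"] by simp
    thus ?thesis unfolding Fl_def eq by simp
  qed
  have PA: "abelian_period w (2*q)"
    unfolding w_def
    by (rule construct_2q[of \<alpha> M \<rho> q pk L \<delta>]) (use al FJ FL M5 q2 L_def \<delta>_def in auto)
  have PB: "\<And>p. abelian_period w p \<Longrightarrow> p < 2*q \<Longrightarrow> p = q + q'"
  proof -
    fix p assume ap: "abelian_period w p" and p2: "p < 2*q"
    obtain us where ad: "abelian_decomposition w us" and l1: "length (us!1) = p"
      using ap unfolding abelian_period_def by blast
    have al0: "0 \<le> \<alpha>" "\<alpha> < 1" using al by auto
    obtain r m c where rp: "r < p" and m1: "1 \<le> m" and rL: "r + m*p \<le> L"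
      and Lr2: "L < r + m*p + p" and Fc: "Fl \<rho> \<alpha> (r + m*p) - Fl \<rho> \<alpha> r = int m * int c"
      using decomp_extract[OF ad[unfolded w_def] al0] unfolding l1 by blast
    have drift: "real m * \<bar>real p * \<alpha> - real c\<bar> < 1"
    proof -
      have e: "\<rho> + real (r + m*p) * \<alpha> = (\<rho> + real r * \<alpha>) + real m * real p * \<alpha>"
        by (simp add: algebra_simps)
      have "\<lfloor>(\<rho> + real r * \<alpha>) + real m * real p * \<alpha>\<rfloor> - \<lfloor>\<rho> + real r * \<alpha>\<rfloor> = int m * int c"
        using Fc unfolding Fl_def e .
      hence "\<bar>real m * real p * \<alpha> - real_of_int (int m * int c)\<bar> < 1" by (rule floor_diff_bound)
      moreover have "real m * real p * \<alpha> - real_of_int (int m * int c) = real m * (real p * \<alpha> - real c)"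
        by (simp add: algebra_simps)
      ultimately show ?thesis by (simp add: abs_mult)
    qed
    obtain u v where uv1: "int p = u * int q + v * int q'" and uv2: "int c = u * int pk + v * int pk'"
      and uv3: "real q * (real p * \<alpha> - real_of_int (int c)) = s * (real p * D - real_of_int v)"
      using uv_repr[OF e1' e2' det' dd qD, of p "int c"] by blast
    have ab: "\<bar>real p * D - real_of_int v\<bar> = real q * \<bar>real p * \<alpha> - real c\<bar>"
    proof -
      have "\<bar>real q * (real p * \<alpha> - real c)\<bar> = \<bar>s\<bar> * \<bar>real p * D - real_of_int v\<bar>"
        using uv3 by (simp add: abs_mult)
      thus ?thesis using s1 by (simp add: abs_mult)
    qed
    consider (A) "u = 1 \<and> v = 1" | (B) "u = 1 \<and> v = 0" | (C) "\<not>(u = 1 \<and> v = 0) \<and> \<not>(u = 1 \<and> v = 1)"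
      by blast
    thus "p = q + q'"
    proof cases
      case A
      hence "int p = int q + int q'" using uv1 by simp
      thus ?thesis by simp
    next
      case C
      have p1: "1 \<le> p" using rp by simp
      have p2': "p + 1 \<le> 2*q" using p2 by simp
      have K: "real p * real q \<le> ((real M + 1) * real q + 1 - 2 * real p) * \<bar>real p * D - real_of_int v\<bar>"
        using kill_ineq[OF qD Dpos(1) MD MD1 Mge qg(1) qg(2) p1 p2' uv1] C by blast
      have "L + 2 \<le> m * p + 2 * p" using Lr2 rp by linarith
      hence "real L + 2 \<le> real m * real p + 2 * real p"
        by (metis of_nat_add of_nat_le_iff of_nat_mult of_nat_numeral)
      hence mpX: "(real M + 1) * real q + 1 - 2 * real p \<le> real m * real p" using Lr by linarith
      have "((real M + 1) * real q + 1 - 2 * real p) * \<bar>real p * D - real_of_int v\<bar>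
          \<le> (real m * real p) * \<bar>real p * D - real_of_int v\<bar>"
        using mpX by (intro mult_right_mono) auto
      also have "\<dots> = (real p * real q) * (real m * \<bar>real p * \<alpha> - real c\<bar>)"
        unfolding ab by (simp add: algebra_simps)
      also have "\<dots> < (real p * real q) * 1"
        using drift p1 q2 by (intro mult_strict_left_mono) auto
      finally show ?thesis using K by simp
    next
      case B
      hence pq: "p = q" using uv1 by simp
      have cpk: "c = pk" using B uv2 by simp
      have rq: "r < q" using rp pq by simp
      have Lq: "L = (M+1)*q - 1" by (rule L_def)
      have Mq1: "(M+1)*q \<ge> 1" using q2 by simp
      have rL': "r + m*q \<le> L" using rL pq by simp
      have "m*q < (M+1)*q"
      proof -
        define A where "A = m*q"
        define B where "B = (M+1)*q"
        have "r + A \<le> L" "L = B - 1" "1 \<le> B" using rL' Lq Mq1 unfolding A_def B_def by auto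
        hence "A < B" by linarith
        thus ?thesis unfolding A_def B_def .
      qed
      hence mM1: "m < M + 1" using mult_less_cancel2 by blast
      have "(m+2)*q = m*q + 2*q" by (simp add: algebra_simps)
      moreover have Lr2': "L < r + m*q + q" using Lr2 pq by simp
      ultimately have "(M+1)*q < (m+2)*q"
      proof -
        assume h1: "(m+2)*q = m*q + 2*q" and h2: "L < r + m*q + q"
        define A where "A = m*q"
        define B where "B = (M+1)*q"
        define C where "C = (m+2)*q"
        have "C = A + 2*q" "L < r + A + q" "L = B - 1" "1 \<le> B" using h1 h2 Lq Mq1
          unfolding A_def B_def C_def by auto
        hence "B < C" using rq by linarith
        thus ?thesis unfolding B_def C_def .
      qed
      hence "M + 1 < m + 2" using mult_less_cancel2 by blast
      hence mM: "m = M" using mM1 by simp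
      have Fc': "Fl \<rho> \<alpha> (r + M*q) - Fl \<rho> \<alpha> r = int M * int pk" using Fc mM pq cpk by simp
      define x where "x = \<rho> + real r * \<alpha>"
      have "real (r + M*q) * \<alpha> = real r * \<alpha> + real M * (real q * \<alpha>)" by (simp add: algebra_simps)
      also have "\<dots> = real r * \<alpha> + real M * (real pk + s * D)" using qa by simp
      finally have "\<rho> + real (r + M*q) * \<alpha> = (x + s * (real M * D)) + real_of_int (int M * int pk)"
        unfolding x_def by (simp add: algebra_simps)
      hence "Fl \<rho> \<alpha> (r + M*q) = \<lfloor>x + s * (real M * D)\<rfloor> + int M * int pk"
        unfolding Fl_def using floor_add_int[of "x + s * (real M * D)" "int M * int pk"] by simp
      moreover have "Fl \<rho> \<alpha> r = \<lfloor>x\<rfloor>" unfolding Fl_def x_def by simp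
      ultimately have flx: "\<lfloor>x + s * (real M * D)\<rfloor> = \<lfloor>x\<rfloor>" using Fc' by simp
      define z where "z = \<lfloor>real r * \<alpha>\<rfloor>"
      have zb: "real_of_int z \<le> real r * \<alpha>" "real r * \<alpha> < real_of_int z + 1" unfolding z_def by linarith+
      have BA: "0 < r \<Longrightarrow> real r * \<alpha> - real_of_int z \<ge> D' \<and> real_of_int z + 1 - real r * \<alpha> \<ge> D'"
      proof -
        assume r0: "0 < r"
        have b1: "\<bar>real r * \<alpha> - real_of_int z\<bar> \<ge> D'"
          by (rule best_approx[OF e1' e2' det' dd qD s1 Dpos(1) Dpos(2) qg(1) r0 rq])
        have b2: "\<bar>real r * \<alpha> - real_of_int (z + 1)\<bar> \<ge> D'"
          by (rule best_approx[OF e1' e2' det' dd qD s1 Dpos(1) Dpos(2) qg(1) r0 rq])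
        show ?thesis using b1 b2 zb by auto
      qed
      have MD1': "1 - real M * D < D" using MD1 by (simp add: algebra_simps)
      show ?thesis
      proof (cases "even k")
        case True
        hence ss: "s = 1" unfolding s_def by simp
        have xe: "x + s * (real M * D) = real r * \<alpha> + 1" unfolding x_def \<rho>_def using True ss by simp
        have f1: "\<lfloor>x + s * (real M * D)\<rfloor> = z + 1" unfolding xe z_def by simp
        have "\<lfloor>x\<rfloor> = z"
        proof -
          have "x = real r * \<alpha> + (1 - real M * D)" unfolding x_def \<rho>_def using True by simp
          moreover have "x < real_of_int z + 1"
          proof (cases "r = 0")
            case True
            hence "x = \<rho>" unfolding x_def by simp
            moreover have "z = 0" unfolding z_def using True by simp
            ultimately show ?thesis using \<rho>01 by simp
          next
            case False
            hence "real_of_int z + 1 - real r * \<alpha> \<ge> D'" using BA by simp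
            thus ?thesis using \<open>x = real r * \<alpha> + (1 - real M * D)\<close> MD1' D2 Dpos by linarith
          qed
          ultimately show ?thesis using zb MD by (simp add: floor_eq_iff)
        qed
        thus ?thesis using f1 flx by simp
      next
        case False
        hence ss: "s = -1" unfolding s_def by simp
        have xo: "x + s * (real M * D) = real r * \<alpha> - D" unfolding x_def \<rho>_def using False ss
          by (simp add: algebra_simps)
        show ?thesis
        proof (cases "r = 0")
          case True
          hence "x = \<rho>" unfolding x_def by simp
          hence "\<lfloor>x\<rfloor> = 0" using \<rho>01 by (simp add: floor_eq_iff)
          moreover have "\<lfloor>x + s * (real M * D)\<rfloor> = -1" unfolding xo using True Dpos Dlt al
            by (simp add: floor_eq_iff)
          ultimately show ?thesis using flx by simp
        next
          case r0: False
          have ba: "real r * \<alpha> - real_of_int z \<ge> D'" "real_of_int z + 1 - real r * \<alpha> \<ge> D'"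
            using BA r0 by auto
          have "\<lfloor>x + s * (real M * D)\<rfloor> = z" unfolding xo using ba zb D2 Dpos
            by (simp add: floor_eq_iff)
          moreover have "\<lfloor>x\<rfloor> = z + 1"
          proof -
            have xx: "x = real r * \<alpha> + (real M - 1) * D" unfolding x_def \<rho>_def using False by simp
            have "(real M - 1) * D < 1" using MD Dpos by (simp add: algebra_simps)
            moreover have "(real M - 1) * D > 1 - 2 * D" using MD1 by (simp add: algebra_simps)
            ultimately show ?thesis unfolding xx using ba D2 Dpos by (simp add: floor_eq_iff)
          qed
          ultimately show ?thesis using flx by simp
        qed
      qed
    qed
  qed
  define P where "P = (\<lambda>p. abelian_period w p)"
  have Pl: "P (Least P)" using PA unfolding P_def by (rule LeastI)
  have Ll: "Least P \<le> 2*q" using PA unfolding P_def by (rule Least_le)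
  have "min_abelian_period w = Least P" unfolding min_abelian_period_def P_def by simp
  moreover have "Least P = q + q' \<or> Least P = 2*q"
  proof (cases "Least P < 2*q")
    case True thus ?thesis using PB Pl unfolding P_def by blast
  next
    case False thus ?thesis using Ll by simp
  qed
  ultimately show ?thesis using wF unfolding q_def q'_def kj by auto
qed


end
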